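(* Let $G$ be a Hamiltonian graph which is not a complete graph of odd order. Then $G$ has an IPD.
   Context: All graphs are finite and simple. A graph of order $n$ is Hamiltonian if it contains a cycle of order $n$ (through all vertices). The order of a path is its number of vertices. A path $P$ in $G$ is induced if the subgraph of $G$ induced on $V(P)$ is exactly $P$. A graph $G$ has an IPD (induced path decomposition) if $V(G)$ can be partitioned into sets $V_1,\dots,V_t$ such that each $G[V_i]$ is a path of order at least $2$. *)

theory Defs
  imports Main
begin

definition simple_graph :: "'a set \<Rightarrow> ('a \<Rightarrow> 'a \<Rightarrow> bool) \<Rightarrow> bool" where
  "simple_graph V E \<longleftrightarrow> finite V \<and> (\<forall>x y. E x y \<longrightarrow> x \<in> V \<and> y \<in> V)
     \<and> (\<forall>x y. E x y \<longrightarrow> E y x) \<and> (\<forall>x. \<not> E x x)"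

definition complete_graph :: "'a set \<Rightarrow> ('a \<Rightarrow> 'a \<Rightarrow> bool) \<Rightarrow> bool" where
  "complete_graph V E \<longleftrightarrow> (\<forall>x\<in>V. \<forall>y\<in>V. x \<noteq> y \<longrightarrow> E x y)"

definition hamiltonian :: "'a set \<Rightarrow> ('a \<Rightarrow> 'a \<Rightarrow> bool) \<Rightarrow> bool" where
  "hamiltonian V E \<longleftrightarrow> (\<exists>vs. distinct vs \<and> set vs = V \<and> length vs \<ge> 3
     \<and> (\<forall>i. Suc i < length vs \<longrightarrow> E (vs ! i) (vs ! Suc i))
     \<and> E (last vs) (hd vs))"

definition induced_path :: "('a \<Rightarrow> 'a \<Rightarrow> bool) \<Rightarrow> 'a set \<Rightarrow> bool" where
  "induced_path E S \<longleftrightarrow> (\<exists>ps. distinct ps \<and> set ps = S \<and>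
     (\<forall>i<length ps. \<forall>j<length ps. E (ps ! i) (ps ! j) \<longleftrightarrow> (i = Suc j \<or> j = Suc i)))"

definition has_IPD :: "'a set \<Rightarrow> ('a \<Rightarrow> 'a \<Rightarrow> bool) \<Rightarrow> bool" where
  "has_IPD V E \<longleftrightarrow> (\<exists>P. \<Union>P = V \<and> (\<forall>A\<in>P. \<forall>B\<in>P. A \<noteq> B \<longrightarrow> A \<inter> B = {})
     \<and> (\<forall>A\<in>P. card A \<ge> 2 \<and> induced_path E A))"

end

theory Submission imports Defs begin

fun pairok :: "('a \<Rightarrow> 'a \<Rightarrow> bool) \<Rightarrow> 'a list \<Rightarrow> bool" where
  "pairok E [] = True"
| "pairok E [x] = False"
| "pairok E (x#y#xs) = (E x y \<and> pairok E xs)"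

fun pairs :: "'a list \<Rightarrow> 'a list list" where
  "pairs (x#y#xs) = [x,y] # pairs xs"
| "pairs _ = []"

lemma pairok_concat: "pairok E xs \<Longrightarrow> concat (pairs xs) = xs"
  by (induction E xs rule: pairok.induct) auto

lemma pairok_elems: "pairok E xs \<Longrightarrow> ps \<in> set (pairs xs) \<Longrightarrow> \<exists>a b. ps = [a,b] \<and> E a b"
  by (induction E xs rule: pairok.induct) auto

lemma pairok_append: "pairok E xs \<Longrightarrow> pairok E ys \<Longrightarrow> pairok E (xs @ ys)"
  by (induction E xs rule: pairok.induct) auto

lemma pairok_range0: "(\<forall>i. E (g i) (g (Suc i))) \<Longrightarrow> pairok E (map g [a..<a+2*m])"
proof (induction m arbitrary: a)
  case 0 then show ?case by simp
next
  case (Suc m)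
  have "[a..<a+2*Suc m] = a # Suc a # [Suc (Suc a)..<Suc (Suc a) + 2*m]"
    by (simp add: upt_conv_Cons)
  then show ?case using Suc.IH[of "Suc (Suc a)"] Suc.prems by (simp del: upt_Suc)
qed

lemma pairok_range: "(\<forall>i. E (g i) (g (Suc i))) \<Longrightarrow> even (b - a) \<Longrightarrow> a \<le> b \<Longrightarrow> pairok E (map g [a..<b])"
proof -
  assume h: "\<forall>i. E (g i) (g (Suc i))" "even (b - a)" "a \<le> b"
  then obtain m where "b - a = 2*m" by blast
  then have "b = a + 2*m" using h(3) by simp
  then show ?thesis using pairok_range0[of E g a m, OF h(1)] by simp
qed

lemma ipd_of_lists:
  assumes "distinct (concat Ls)" "set (concat Ls) = V"
    "\<forall>ps\<in>set Ls. 2 \<le> length ps \<and> (\<forall>i<length ps. \<forall>j<length ps. E (ps!i) (ps!j) \<longleftrightarrow> (i = Suc j \<or> j = Suc i))"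
  shows "has_IPD V E"
  unfolding has_IPD_def
proof (intro exI[of _ "set ` set Ls"] conjI ballI impI)
  show "\<Union> (set ` set Ls) = V" using assms(2) by simp
next
  fix A B assume "A \<in> set ` set Ls" "B \<in> set ` set Ls" "A \<noteq> B"
  then show "A \<inter> B = {}" using assms(1) unfolding distinct_concat_iff by blast
next
  fix A assume "A \<in> set ` set Ls"
  then obtain ps where ps: "ps \<in> set Ls" "A = set ps" by blast
  have d: "distinct ps" using assms(1) ps(1) unfolding distinct_concat_iff by blast
  show "2 \<le> card A" using ps assms(3) distinct_card[OF d] by auto
  show "induced_path E A" unfolding induced_path_def
    using ps assms(3) d by blast
qed

lemma pair_ind:
  assumes "E a b" "E b a" "\<not> E a a" "\<not> E b b"
  shows "\<forall>i<length [a,b]. \<forall>j<length [a,b]. E ([a,b]!i) ([a,b]!j) \<longleftrightarrow> (i = Suc j \<or> j = Suc i)"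
  using assms by (auto simp: less_Suc_eq nth_Cons')

lemma triple_ind:
  assumes "E a b" "E b a" "E b c" "E c b" "\<not> E a c" "\<not> E c a" "\<not> E a a" "\<not> E b b" "\<not> E c c"
  shows "\<forall>i<length [a,b,c]. \<forall>j<length [a,b,c]. E ([a,b,c]!i) ([a,b,c]!j) \<longleftrightarrow> (i = Suc j \<or> j = Suc i)"
  using assms by (auto simp: less_Suc_eq nth_Cons')

lemma ipd_vertex:
  assumes sg: "simple_graph V E" and d: "distinct xs" and s: "set xs = V"
    and c: "pairok E xs \<or> (\<exists>a b c ys. xs = [a,b,c] @ ys \<and> E a b \<and> E b c \<and> \<not> E a c \<and> pairok E ys)"
  shows "has_IPD V E"
proof -
  have sym: "\<And>x y. E x y \<Longrightarrow> E y x" and irr: "\<And>x. \<not> E x x" using sg unfolding simple_graph_def by auto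
  have pp: "\<forall>ps\<in>set (pairs ys). 2 \<le> length ps \<and> (\<forall>i<length ps. \<forall>j<length ps. E (ps!i) (ps!j) \<longleftrightarrow> (i = Suc j \<or> j = Suc i))"
    if po: "pairok E ys" for ys
  proof
    fix ps assume "ps \<in> set (pairs ys)"
    then obtain a b where "ps = [a,b]" "E a b" using pairok_elems[OF po] by blast
    then show "2 \<le> length ps \<and> (\<forall>i<length ps. \<forall>j<length ps. E (ps!i) (ps!j) \<longleftrightarrow> (i = Suc j \<or> j = Suc i))"
      using pair_ind[of E a b] sym irr by simp
  qed
  from c show ?thesis
  proof
    assume "pairok E xs"
    then show ?thesis using ipd_of_lists[of "pairs xs" V E] pairok_concat pp d s by metis
  next
    assume "\<exists>a b c ys. xs = [a,b,c] @ ys \<and> E a b \<and> E b c \<and> \<not> E a c \<and> pairok E ys"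
    then obtain a b c ys where h: "xs = [a,b,c] @ ys" "E a b" "E b c" "\<not> E a c" "pairok E ys" by blast
    have cc: "concat ([a,b,c] # pairs ys) = xs" using h pairok_concat by simp
    have t: "\<forall>i<length [a,b,c]. \<forall>j<length [a,b,c]. E ([a,b,c]!i) ([a,b,c]!j) \<longleftrightarrow> (i = Suc j \<or> j = Suc i)"
      using triple_ind[of E a b c] h sym irr by blast
    show ?thesis
      apply (rule ipd_of_lists[of "[a,b,c] # pairs ys" V E])
      using cc d s t pp[OF h(5)] by auto
  qed
qed


lemma odd_case:
  fixes g :: "nat \<Rightarrow> 'a"
  assumes n: "odd n" and k: "even k" "2 \<le> k" "k < n"
    and G1: "\<forall>i. E (g i) (g (Suc i))"
    and G2: "\<forall>i d. even d \<and> 2 \<le> d \<and> d < k \<longrightarrow> E (g i) (g (i+d))"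
    and G0: "\<not> E (g 0) (g k)"
    and sym: "\<forall>x y. E x y \<longrightarrow> E y x"
  shows "\<exists>L. distinct L \<and> set L = {0..<n} \<and> (\<exists>a b c R. L = [a,b,c]@R \<and> E (g a) (g b) \<and> E (g b) (g c) \<and> \<not> E (g a) (g c) \<and> pairok E (map g R))"
proof -
  have pr: "pairok E (map g [a..<b])" if "even (b - a)" "a \<le> b" for a b
    using pairok_range[of E g b a, OF G1 that] .
  have tail: "pairok E (map g [k+1..<n])" using pr[of n "k+1"] n k by simp
  show ?thesis
  proof (cases "k = 2")
    case True
    have "pairok E (map g [3..<n])" using pr[of n 3] n k by simp
    moreover have "distinct ([0,1,2]@[3..<n]) \<and> set ([0,1,2]@[3..<n]) = {0..<n}" using k True by auto
    moreover have "E (g 0) (g 1)" "E (g 1) (g 2)" using G1 by (auto simp: numeral_2_eq_2)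
    ultimately show ?thesis using G0 True by blast
  next
    case False
    then have k4: "4 \<le> k" using k by presburger
    have "even (k - 4)" using k by presburger
    then have p4k: "pairok E (map g [4..<k] @ map g [k+1..<n])"
      using pairok_append[of E "map g [4..<k]" "map g [k+1..<n]"] pr[of k 4] tail k4 by simp
    show ?thesis
    proof (cases "E (g 0) (g 3)")
      case e03: False
      show ?thesis
      proof (cases "k = 4")
        case True
        have "E (g 1) (g 3)" using G2[rule_format, of 2 1] True by (simp add: numeral_3_eq_3)
        moreover have "E (g 0) (g 1)" using G1 by auto
        moreover have "E (g 2) (g 4)" using G2[rule_format, of 2 2] True by simp
        moreover have "pairok E (map g ([2,4]@[5..<n]))"
          using pairok_append[of E "[g 2, g 4]" "map g [5..<n]"] calculation(3) pr[of n 5] n k True by simp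
        moreover have "distinct ([0,1,3]@[2,4]@[5..<n]) \<and> set ([0,1,3]@[2,4]@[5..<n]) = {0..<n}" using k True by auto
        ultimately show ?thesis using e03 by (metis append.assoc append_Cons append_Nil)
      next
        case False
        then have k6: "6 \<le> k" using k4 k by presburger
        have "E (g 0) (g 4)" using G2[rule_format, of 4 0] k6 by simp
        moreover have "E (g 4) (g 3)" using G1 sym by (metis numeral_3_eq_3 Suc_numeral semiring_norm(2) semiring_norm(8))
        moreover have "pairok E (map g ([1,2]@[5..<n]))"
        proof -
          have "even (n - 5)" "5 \<le> n" using n k6 k by presburger+
          then show ?thesis using pairok_append[of E "[g 1, g 2]" "map g [5..<n]"] G1 pr[of n 5]
          by (simp add: numeral_2_eq_2)
        qed
        moreover have "distinct ([0,4,3]@[1,2]@[5..<n]) \<and> set ([0,4,3]@[1,2]@[5..<n]) = {0..<n}" using k6 k by auto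
        ultimately show ?thesis using e03 by (metis append.assoc append_Cons append_Nil)
      qed
    next
      case e03: True
      show ?thesis
      proof (cases "E (g 3) (g k)")
        case True
        have "pairok E (map g ([1,2]@[4..<k]@[k+1..<n]))"
          using pairok_append[of E "[g 1, g 2]" "map g ([4..<k]@[k+1..<n])"]
            G1 p4k by (simp add: numeral_2_eq_2)
        moreover have "distinct ([0,3,k]@[1,2]@[4..<k]@[k+1..<n]) \<and> set ([0,3,k]@[1,2]@[4..<k]@[k+1..<n]) = {0..<n}" using k4 k by auto
        ultimately show ?thesis using e03 True G0 by (metis append.assoc append_Cons append_Nil)
      next
        case e3k: False
        have "k \<noteq> 4" proof
          assume "k = 4" then show False using e3k G1 by (metis numeral_3_eq_3 Suc_numeral semiring_norm(2) semiring_norm(8))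
        qed
        then have k6: "6 \<le> k" using k4 k by presburger
        have "E (g 2) (g k)"
        proof -
          have "2 + (k - 2) = k" "even (k - 2)" "2 \<le> k - 2" "k - 2 < k" using k6 k by presburger+
          then show ?thesis using G2[rule_format, of "k-2" 2] by metis
        qed
        moreover have "E (g 3) (g 2)" using G1 sym by (metis numeral_3_eq_3 Suc_numeral semiring_norm(2) semiring_norm(8) numeral_2_eq_2)
        moreover have "pairok E (map g ([0,1]@[4..<k]@[k+1..<n]))"
          using pairok_append[of E "[g 0, g 1]" "map g ([4..<k]@[k+1..<n])"]
            G1 p4k by simp
        moreover have "distinct ([3,2,k]@[0,1]@[4..<k]@[k+1..<n]) \<and> set ([3,2,k]@[0,1]@[4..<k]@[k+1..<n]) = {0..<n}" using k6 k by auto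
        ultimately show ?thesis using e3k by (metis append.assoc append_Cons append_Nil)
      qed
    qed
  qed
qed


lemma ipd_index:
  assumes sg: "simple_graph V E" and dg: "distinct (map g [0..<n])" and sv: "set (map g [0..<n]) = V"
    and dL: "distinct L" and sL: "set L = {0..<n}"
    and c: "pairok E (map g L) \<or> (\<exists>a b c R. L = [a,b,c]@R \<and> E (g a) (g b) \<and> E (g b) (g c) \<and> \<not> E (g a) (g c) \<and> pairok E (map g R))"
  shows "has_IPD V E"
proof (rule ipd_vertex[OF sg, of "map g L"])
  have inj: "inj_on g {0..<n}" using dg by (simp add: distinct_map)
  show "distinct (map g L)" using dL inj sL by (simp add: distinct_map)
  show "set (map g L) = V" using sv sL by simp
  show "pairok E (map g L) \<or> (\<exists>a b c ys. map g L = [a, b, c] @ ys \<and> E a b \<and> E b c \<and> \<not> E a c \<and> pairok E ys)"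
    using c by fastforce
qed

lemma rot_map:
  assumes "n = length vs"
  shows "map (\<lambda>i. vs ! ((r + i) mod n)) [0..<n] = rotate r vs"
  by (rule nth_equalityI) (simp_all add: assms nth_rotate)

theorem mainTheorem3:
  fixes V :: "'a set" and E :: "'a \<Rightarrow> 'a \<Rightarrow> bool"
  assumes "simple_graph V E"
    and "hamiltonian V E"
    and "\<not> (complete_graph V E \<and> odd (card V))"
  shows "has_IPD V E"
proof -
  have sym: "\<forall>x y. E x y \<longrightarrow> E y x" and irr: "\<And>x. \<not> E x x" using assms(1) unfolding simple_graph_def by auto
  obtain vs where vs: "distinct vs" "set vs = V" "length vs \<ge> 3"
     "\<forall>i. Suc i < length vs \<longrightarrow> E (vs ! i) (vs ! Suc i)" "E (last vs) (hd vs)"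
    using assms(2) unfolding hamiltonian_def by blast
  define n where "n = length vs"
  have n3: "n \<ge> 3" using vs n_def by simp
  have cardV: "card V = n" using vs distinct_card n_def by blast
  define cv where "cv m = vs ! (m mod n)" for m
  have cyc: "E (cv m) (cv (Suc m))" for m
  proof (cases "Suc (m mod n) = n")
    case True
    then have "Suc m mod n = 0" by (simp add: mod_Suc)
    moreover have "last vs = vs ! (m mod n)" 
    proof -
      have "m mod n = length vs - 1" using True n_def by simp
      moreover have "vs \<noteq> []" using vs(3) by auto
      ultimately show ?thesis using n_def by (simp add: last_conv_nth)
    qed
    moreover have "hd vs = vs ! 0" using vs(3) by (cases vs) auto
    ultimately show ?thesis using vs(5) cv_def by simp
  next
    case False
    then have "Suc m mod n = Suc (m mod n)" by (simp add: mod_Suc)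
    moreover have "Suc (m mod n) < n" using False n3 by (metis Suc_lessI mod_less_divisor not_less_eq_eq le_trans less_imp_le numeral_3_eq_3 zero_less_Suc Suc_le_lessD)
    ultimately show ?thesis using vs(4) cv_def n_def by simp
  qed
  show ?thesis
  proof (cases "even n")
    case True
    have "map cv [0..<n] = vs" using rot_map[OF n_def, of 0] unfolding cv_def by simp
    moreover have "pairok E (map cv [0..<n])" using pairok_range[of E cv n 0] cyc True by simp
    ultimately show ?thesis
      using ipd_index[OF assms(1), of cv n "[0..<n]"] vs by simp
  next
    case nodd: False
    then have "\<not> complete_graph V E" using assms(3) cardV by simp
    then obtain x y where xy: "x \<in> V" "y \<in> V" "x \<noteq> y" "\<not> E x y" unfolding complete_graph_def by blast
    define S where "S = {k. even k \<and> 2 \<le> k \<and> k < n \<and> (\<exists>p. \<not> E (cv p) (cv (p + k)))}"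
    have ne: "S \<noteq> {}" if "p < q" "q < n" "\<not> E (vs ! p) (vs ! q)" for p q
    proof (cases "even (q - p)")
      case True
      have "cv p = vs ! p" "cv (p + (q - p)) = vs ! q" using that cv_def by simp_all
      moreover have "2 \<le> q - p" "q - p < n" using True that by presburger+
      ultimately have "q - p \<in> S" unfolding S_def using True that by (metis (mono_tags, lifting) mem_Collect_eq)
      then show ?thesis by blast
    next
      case False
      have "cv q = vs ! q" using that cv_def by simp
      moreover have "q + (n - (q - p)) = p + n" using that by simp
      moreover have "cv (p + n) = vs ! p" using that cv_def by simp
      moreover have "even (n - (q - p))" "2 \<le> n - (q - p)" "n - (q - p) < n" using False nodd that by presburger+
      ultimately have "\<not> E (cv q) (cv (q + (n - (q - p))))" using that sym by metis
      then have "n - (q - p) \<in> S" unfolding S_def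
        using \<open>even (n - (q - p))\<close> \<open>2 \<le> n - (q - p)\<close> \<open>n - (q - p) < n\<close>
        by (metis (mono_tags, lifting) mem_Collect_eq)
      then show ?thesis by blast
    qed
    obtain p q where pq: "p < n" "q < n" "vs ! p = x" "vs ! q = y"
      using xy vs(2) n_def by (metis in_set_conv_nth)
    have "S \<noteq> {}"
    proof (cases "p < q")
      case True then show ?thesis using ne[of p q] pq xy by simp
    next
      case False
      then have "q < p" using pq xy by (metis nat_neq_iff)
      then show ?thesis using ne[of q p] pq xy sym by auto
    qed
    then obtain k0 where "k0 \<in> S" by blast
    define k where "k = (LEAST k. k \<in> S)"
    have kS: "k \<in> S" using LeastI[of "\<lambda>k. k \<in> S" k0] \<open>k0 \<in> S\<close> k_def by simp
    have kmin: "E (cv p) (cv (p + d))" if "even d" "2 \<le> d" "d < k" for p d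
    proof (rule ccontr)
      assume "\<not> E (cv p) (cv (p + d))"
      then have "d \<in> S" using that kS unfolding S_def by auto
      then show False using not_less_Least[of d "\<lambda>k. k \<in> S"] that k_def by simp
    qed
    obtain r where r: "\<not> E (cv r) (cv (r + k))" using kS unfolding S_def by blast
    define g where "g i = cv (r + i)" for i
    have G1: "\<forall>i. E (g i) (g (Suc i))" using cyc g_def by simp
    have G2: "\<forall>i d. even d \<and> 2 \<le> d \<and> d < k \<longrightarrow> E (g i) (g (i+d))"
      using kmin g_def by (metis add.assoc)
    have G0: "\<not> E (g 0) (g k)" using r g_def by simp
    have kk: "even k" "2 \<le> k" "k < n" using kS S_def by auto
    obtain L where L: "distinct L" "set L = {0..<n}" "(\<exists>a b c R. L = [a,b,c]@R \<and> E (g a) (g b) \<and> E (g b) (g c) \<and> \<not> E (g a) (g c) \<and> pairok E (map g R))"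
      using odd_case[OF nodd kk G1 G2 G0 sym] by blast
    have mg: "map g [0..<n] = rotate r vs" using rot_map[OF n_def, of r] unfolding g_def cv_def by (simp add: mod_add_left_eq)
    show ?thesis
      using ipd_index[OF assms(1), of g n L] L mg vs by simp
  qed
qed

end
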